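(* Assume Assumption (A1) below holds for the chosen bridge extension. Then: (i) For all $0\le s<t\le 1$, every $\ell\in\{1,\dots,L\}$ and every $\mathbf x_t\in\mathsf X$ with $p_t(\mathbf x_t)>0$, $$p^\ell_{s|t}(\cdot\mid \mathbf x_t)=q^\ell_{s|0,t}\big(\cdot\mid \hat{\mathbf x}^{\mathrm{loo}}_0(\mathbf x_t,t)^\ell,\ \mathbf x_t^\ell\big).$$ (ii) Consequently, for every time grid, the predictor $d^\star(\mathbf x,t):=\hat{\mathbf x}^{\mathrm{loo}}_0(\mathbf x,t)$ minimizes $J$: $J(d^\star)\le J(d)$ for every predictor $d$. (iii) (Uniqueness for UDM.) Consider the uniform case $\pi^\ell=\mathbf 1/K$ with the canonical extension given below. Assume $\alpha$ is strictly decreasing with $\alpha_0=1$ and $\alpha_t\in(0,1)$ for $t\in(0,1]$. Let $0<s<t\le 1$ and let $e_k\in\mathsf V$. Then the map $\nu\mapsto q^\ell_{s|0,t}(\cdot\mid\nu,e_k)$ is injective on $\Delta_K$. In particular, if $\nu\in\Delta_K$ satisfies $q^\ell_{s|0,t}(\cdot\mid \nu,\mathbf x_t^\ell)=p^\ell_{s|t}(\cdot\mid\mathbf x_t)$, then $\nu=\hat{\mathbf x}^{\mathrm{loo}}_0(\mathbf x_t,t)^\ell$. Hence the minimizer in (ii) is unique (at every $\mathbf x_t$ and for every term with $s_i>0$).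
   Context: **Setup.** - Let $K\ge2$, $L\ge1$ and $\mathsf V=\{1,\dots,K\}$. Tokens are identified with the standard basis vectors $e_1,\dots,e_K$ of $\mathbb R^K$. - $\Delta_K$ is the probability simplex in $\mathbb R^K$, and $\mathbf 1$ is the all-ones vector. For $\pi\in\Delta_K$ and a token $x$, $\mathrm{Cat}(x;\pi):=\langle x,\pi\rangle$. - $\mathsf X=\mathsf V^L$. For $\mathbf x\in\mathsf X$, $\mathbf x^\ell$ denotes its $\ell$-th token and $\mathbf x^{-\ell}\in\mathsf V^{L-1}$ denotes the remaining tokens. - $p_0$ is a probability distribution on $\mathsf X$. - The noise schedule $\alpha:[0,1]\to[0,1]$ is nonincreasing with $\alpha_0=1$, and $\alpha_{t|s}:=\alpha_t/\alpha_s$. - For each position $\ell$ fix $\pi^\ell\in\Delta_K$. The forward token kernels are $q^\ell_{t|s}(x_t\mid x_s)=\mathrm{Cat}(x_t;\alpha_{t|s}x_s+(1-\alpha_{t|s})\pi^\ell)$ for $0\le s<t\le1$, and $q_{t|s}(\mathbf x_t\mid\mathbf x_s)=\prod_\ell q^\ell_{t|s}(\mathbf x_t^\ell\mid\mathbf x_s^\ell)$. - The same formula $q^\ell_{t|0}(x\mid\nu)=\langle x,\alpha_t\nu+(1-\alpha_t)\pi^\ell\rangle$ is used for $\nu\in\Delta_K$. - $(X_t)_{t\in[0,1]}$ is the Markov process with $X_0\sim p_0$ and these transitions. $p_t$ is the law of $X_t$, and $p_t(\mathbf x^{-\ell})$ denotes the marginal of $X_t^{-\ell}$. - "UDM" means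 $\pi^\ell=\mathbf 1/K$ for all $\ell$. **Posteriors.** - Denoiser: $p^\ell_{0|t}(x\mid\mathbf x_t):=\mathbb P(X_0^\ell=x\mid X_t=\mathbf x_t)$. - Leave-one-out (LOO) posterior: $p^{\mathrm{loo},\ell}_{0|t}(x\mid\mathbf x_t^{-\ell}):=\mathbb P(X_0^\ell=x\mid X_t^{-\ell}=\mathbf x_t^{-\ell})$. Equivalently it is proportional to $\sum_{\mathbf x_0^{-\ell}}p_0(\mathbf x_0)\prod_{j\ne\ell}q^j_{t|0}(\mathbf x_t^j\mid\mathbf x_0^j)$ with $\mathbf x_0^\ell=x$. - Its mean vector is $\hat{\mathbf x}^{\mathrm{loo}}_0(\mathbf x_t,t)^\ell:=\sum_x p^{\mathrm{loo},\ell}_{0|t}(x\mid\mathbf x_t^{-\ell})\,x\in\Delta_K$. - Reverse token marginal: $p^\ell_{s|t}(x\mid\mathbf x_t):=\mathbb P(X^\ell_s=x\mid X_t=\mathbf x_t)$. **Bridge extension.** - For $0\le s<t$, a bridge extension is a map $(\nu,x_t)\mapsto q^\ell_{s|0,t}(\cdot\mid\nu,x_t)\in\Delta_K$ defined for $\nu\in\Delta_K$ and $x_t\in\mathsf V$. - For one-hot $\nu=x_0$ with $q^\ell_{t|0}(x_t\mid x_0)>0$ it equals $q^\ell_{t|s}(x_t\mid x_s)q^\ell_{s|0}(x_s\mid x_0)/q^\ell_{t|0}(x_t\mid x_0)$. - Assumption (A1): for all $x_s,x_t\in\mathsf V$ and all $\nu\in\Delta_K$ with $q^\ell_{t|0}(x_t\mid\nu)>0$,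 $$q^\ell_{s|0,t}(x_s\mid\nu,x_t)=\frac{q^\ell_{t|s}(x_t\mid x_s)\,q^\ell_{s|0}(x_s\mid\nu)}{q^\ell_{t|0}(x_t\mid\nu)}.$$ - In the UDM case the canonical extension is: for $x_t=e_k$, $$q^\ell_{s|0,t}(\cdot\mid\nu,e_k)=\mathrm{Cat}\Big(\cdot;\ \frac{K\alpha_t\nu_k e_k+(\alpha_{t|s}-\alpha_t)e_k+(\alpha_s-\alpha_t)\nu+D_{s,t}\mathbf 1/K}{K\alpha_t\nu_k+1-\alpha_t}\Big),$$ with $\nu_k=\langle e_k,\nu\rangle$ and $D_{s,t}=(1-\alpha_{t|s})(1-\alpha_s)$. This extension satisfies (A1). **Objective.** - Fix a grid $0=t_0<t_1<\dots<t_n=1$ and set $s_i=t_{i-1}$. - A predictor is a function $d:\mathsf X\times[0,1]\to\Delta_K^L$. - The objective is $$J(d):=\sum_{i=1}^n\sum_{\ell=1}^L\mathbb E\Big[\mathrm{KL}\Big(p^\ell_{s_i|t_i}(\cdot\mid X_{t_i})\ \Big\|\ q^\ell_{s_i|0,t_i}\big(\cdot\mid d(X_{t_i},t_i)^\ell,X^\ell_{t_i}\big)\Big)\Big].$$ *)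

theory Defs
  imports Complex_Main "HOL-Library.FuncSet" "HOL-Library.Extended_Real"
begin

(* Tokens are indices 0..K-1 (token k stands for the basis vector e_k).
   Vectors in R^K are functions nat => real, required to vanish outside {..<K}. *)

definition simplex :: "nat \<Rightarrow> (nat \<Rightarrow> real) \<Rightarrow> bool" where
  "simplex K \<nu> \<longleftrightarrow> (\<forall>j. K \<le> j \<longrightarrow> \<nu> j = 0) \<and> (\<forall>j<K. 0 \<le> \<nu> j) \<and> (\<Sum>j<K. \<nu> j) = 1"

definition seqs :: "nat \<Rightarrow> nat \<Rightarrow> (nat \<Rightarrow> nat) set" where
  "seqs K L = {..<L} \<rightarrow>\<^sub>E {..<K}"

definition is_dist :: "nat \<Rightarrow> nat \<Rightarrow> ((nat \<Rightarrow> nat) \<Rightarrow> real) \<Rightarrow> bool" where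
  "is_dist K L p0 \<longleftrightarrow> (\<forall>x\<in>seqs K L. 0 \<le> p0 x) \<and> (\<Sum>x\<in>seqs K L. p0 x) = 1"

definition schedule :: "(real \<Rightarrow> real) \<Rightarrow> bool" where
  "schedule \<alpha> \<longleftrightarrow> \<alpha> 0 = 1 \<and> (\<forall>t\<in>{0..1}. 0 \<le> \<alpha> t \<and> \<alpha> t \<le> 1)
     \<and> (\<forall>s t. 0 \<le> s \<longrightarrow> s \<le> t \<longrightarrow> t \<le> 1 \<longrightarrow> \<alpha> t \<le> \<alpha> s)"

(* forward token kernel q^l_{t|s}(y | x) for one-hot x *)
definition qfwd :: "(real \<Rightarrow> real) \<Rightarrow> (nat \<Rightarrow> nat \<Rightarrow> real) \<Rightarrow> nat \<Rightarrow> real \<Rightarrow> real \<Rightarrow> nat \<Rightarrow> nat \<Rightarrow> real" where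
  "qfwd \<alpha> \<pi> l s t y x = (\<alpha> t / \<alpha> s) * (if y = x then 1 else 0) + (1 - \<alpha> t / \<alpha> s) * \<pi> l y"

definition q0 :: "(real \<Rightarrow> real) \<Rightarrow> (nat \<Rightarrow> nat \<Rightarrow> real) \<Rightarrow> nat \<Rightarrow> real \<Rightarrow> nat \<Rightarrow> (nat \<Rightarrow> real) \<Rightarrow> real" where
  "q0 \<alpha> \<pi> l t y \<nu> = \<alpha> t * \<nu> y + (1 - \<alpha> t) * \<pi> l y"

definition qseq :: "nat \<Rightarrow> (real \<Rightarrow> real) \<Rightarrow> (nat \<Rightarrow> nat \<Rightarrow> real) \<Rightarrow> real \<Rightarrow> real \<Rightarrow> (nat \<Rightarrow> nat) \<Rightarrow> (nat \<Rightarrow> nat) \<Rightarrow> real" where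
  "qseq L \<alpha> \<pi> s t y x = (\<Prod>l<L. qfwd \<alpha> \<pi> l s t (y l) (x l))"

definition pt :: "nat \<Rightarrow> nat \<Rightarrow> ((nat \<Rightarrow> nat) \<Rightarrow> real) \<Rightarrow> (real \<Rightarrow> real) \<Rightarrow> (nat \<Rightarrow> nat \<Rightarrow> real) \<Rightarrow> real \<Rightarrow> (nat \<Rightarrow> nat) \<Rightarrow> real" where
  "pt K L p0 \<alpha> \<pi> t y = (\<Sum>x0\<in>seqs K L. p0 x0 * qseq L \<alpha> \<pi> 0 t y x0)"

definition joint2 :: "nat \<Rightarrow> nat \<Rightarrow> ((nat \<Rightarrow> nat) \<Rightarrow> real) \<Rightarrow> (real \<Rightarrow> real) \<Rightarrow> (nat \<Rightarrow> nat \<Rightarrow> real) \<Rightarrow> real \<Rightarrow> real \<Rightarrow> (nat \<Rightarrow> nat) \<Rightarrow> (nat \<Rightarrow> nat) \<Rightarrow> real" where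
  "joint2 K L p0 \<alpha> \<pi> s t xs xt =
     (\<Sum>x0\<in>seqs K L. p0 x0 * qseq L \<alpha> \<pi> 0 s xs x0 * qseq L \<alpha> \<pi> s t xt xs)"

(* reverse token marginal p^l_{s|t}(. | xt) = P(X_s^l = . | X_t = xt) *)
definition prev :: "nat \<Rightarrow> nat \<Rightarrow> ((nat \<Rightarrow> nat) \<Rightarrow> real) \<Rightarrow> (real \<Rightarrow> real) \<Rightarrow> (nat \<Rightarrow> nat \<Rightarrow> real) \<Rightarrow> nat \<Rightarrow> real \<Rightarrow> real \<Rightarrow> (nat \<Rightarrow> nat) \<Rightarrow> nat \<Rightarrow> real" where
  "prev K L p0 \<alpha> \<pi> l s t xt = (\<lambda>x.
     (\<Sum>xs\<in>{xs\<in>seqs K L. xs l = x}. joint2 K L p0 \<alpha> \<pi> s t xs xt) / pt K L p0 \<alpha> \<pi> t xt)"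

definition loo_w :: "nat \<Rightarrow> ((nat \<Rightarrow> nat) \<Rightarrow> real) \<Rightarrow> (real \<Rightarrow> real) \<Rightarrow> (nat \<Rightarrow> nat \<Rightarrow> real) \<Rightarrow> nat \<Rightarrow> real \<Rightarrow> (nat \<Rightarrow> nat) \<Rightarrow> (nat \<Rightarrow> nat) \<Rightarrow> real" where
  "loo_w L p0 \<alpha> \<pi> l t xt x0 = p0 x0 * (\<Prod>j\<in>{..<L} - {l}. qfwd \<alpha> \<pi> j 0 t (xt j) (x0 j))"

(* LOO posterior P(X_0^l = x | X_t^{-l} = xt^{-l}) *)
definition loo_post :: "nat \<Rightarrow> nat \<Rightarrow> ((nat \<Rightarrow> nat) \<Rightarrow> real) \<Rightarrow> (real \<Rightarrow> real) \<Rightarrow> (nat \<Rightarrow> nat \<Rightarrow> real) \<Rightarrow> nat \<Rightarrow> real \<Rightarrow> (nat \<Rightarrow> nat) \<Rightarrow> nat \<Rightarrow> real" where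
  "loo_post K L p0 \<alpha> \<pi> l t xt x =
     (\<Sum>x0\<in>{x0\<in>seqs K L. x0 l = x}. loo_w L p0 \<alpha> \<pi> l t xt x0) / (\<Sum>x0\<in>seqs K L. loo_w L p0 \<alpha> \<pi> l t xt x0)"

definition loo_mean :: "nat \<Rightarrow> nat \<Rightarrow> ((nat \<Rightarrow> nat) \<Rightarrow> real) \<Rightarrow> (real \<Rightarrow> real) \<Rightarrow> (nat \<Rightarrow> nat \<Rightarrow> real) \<Rightarrow> (nat \<Rightarrow> nat) \<Rightarrow> real \<Rightarrow> nat \<Rightarrow> nat \<Rightarrow> real" where
  "loo_mean K L p0 \<alpha> \<pi> xt t l = (\<lambda>k. if k < K then loo_post K L p0 \<alpha> \<pi> l t xt k else 0)"

(* A bridge extension: bridge l s t nu xt = q^l_{s|0,t}(. | nu, xt), with values in Delta_K *)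
definition bridge_ext :: "nat \<Rightarrow> nat \<Rightarrow> (nat \<Rightarrow> real \<Rightarrow> real \<Rightarrow> (nat \<Rightarrow> real) \<Rightarrow> nat \<Rightarrow> nat \<Rightarrow> real) \<Rightarrow> bool" where
  "bridge_ext K L br \<longleftrightarrow> (\<forall>l<L. \<forall>s t. 0 \<le> s \<longrightarrow> s < t \<longrightarrow> t \<le> 1 \<longrightarrow>
      (\<forall>\<nu> xt. simplex K \<nu> \<longrightarrow> xt < K \<longrightarrow> simplex K (br l s t \<nu> xt)))"

definition A1 :: "nat \<Rightarrow> nat \<Rightarrow> (real \<Rightarrow> real) \<Rightarrow> (nat \<Rightarrow> nat \<Rightarrow> real) \<Rightarrow> (nat \<Rightarrow> real \<Rightarrow> real \<Rightarrow> (nat \<Rightarrow> real) \<Rightarrow> nat \<Rightarrow> nat \<Rightarrow> real) \<Rightarrow> bool" where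
  "A1 K L \<alpha> \<pi> br \<longleftrightarrow> (\<forall>l<L. \<forall>s t. 0 \<le> s \<longrightarrow> s < t \<longrightarrow> t \<le> 1 \<longrightarrow>
      (\<forall>xs<K. \<forall>xt<K. \<forall>\<nu>. simplex K \<nu> \<longrightarrow> 0 < q0 \<alpha> \<pi> l t xt \<nu> \<longrightarrow>
         br l s t \<nu> xt xs = qfwd \<alpha> \<pi> l s t xt xs * q0 \<alpha> \<pi> l s xs \<nu> / q0 \<alpha> \<pi> l t xt \<nu>))"

(* KL divergence on {..<K}, with 0 log 0 = 0 and value +infinity if support condition fails *)
definition KL :: "nat \<Rightarrow> (nat \<Rightarrow> real) \<Rightarrow> (nat \<Rightarrow> real) \<Rightarrow> ereal" where
  "KL K p q = (if \<exists>x<K. 0 < p x \<and> q x \<le> 0 then \<infinity>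
               else ereal (\<Sum>x\<in>{x. x < K \<and> 0 < p x}. p x * ln (p x / q x)))"

definition grid :: "nat \<Rightarrow> (nat \<Rightarrow> real) \<Rightarrow> bool" where
  "grid n tg \<longleftrightarrow> 1 \<le> n \<and> tg 0 = 0 \<and> tg n = 1 \<and> (\<forall>i<n. tg i < tg (Suc i))"

definition predictor :: "nat \<Rightarrow> nat \<Rightarrow> ((nat \<Rightarrow> nat) \<Rightarrow> real \<Rightarrow> nat \<Rightarrow> nat \<Rightarrow> real) \<Rightarrow> bool" where
  "predictor K L d \<longleftrightarrow> (\<forall>x\<in>seqs K L. \<forall>t\<in>{0..1}. \<forall>l<L. simplex K (d x t l))"

(* objective J(d); expectation over X_{t_i} ~ p_{t_i} written as a finite sum over its support *)
definition Jobj :: "nat \<Rightarrow> nat \<Rightarrow> ((nat \<Rightarrow> nat) \<Rightarrow> real) \<Rightarrow> (real \<Rightarrow> real) \<Rightarrow> (nat \<Rightarrow> nat \<Rightarrow> real)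
    \<Rightarrow> (nat \<Rightarrow> real \<Rightarrow> real \<Rightarrow> (nat \<Rightarrow> real) \<Rightarrow> nat \<Rightarrow> nat \<Rightarrow> real) \<Rightarrow> nat \<Rightarrow> (nat \<Rightarrow> real)
    \<Rightarrow> ((nat \<Rightarrow> nat) \<Rightarrow> real \<Rightarrow> nat \<Rightarrow> nat \<Rightarrow> real) \<Rightarrow> ereal" where
  "Jobj K L p0 \<alpha> \<pi> br n tg d =
     (\<Sum>i\<in>{1..n}. \<Sum>l<L. \<Sum>x\<in>{x\<in>seqs K L. 0 < pt K L p0 \<alpha> \<pi> (tg i) x}.
        ereal (pt K L p0 \<alpha> \<pi> (tg i) x) *
        KL K (prev K L p0 \<alpha> \<pi> l (tg (i - 1)) (tg i) x) (br l (tg (i - 1)) (tg i) (d x (tg i) l) (x l)))"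

definition unif :: "nat \<Rightarrow> nat \<Rightarrow> nat \<Rightarrow> real" where
  "unif K l y = (if y < K then 1 / real K else 0)"

definition canon :: "nat \<Rightarrow> (real \<Rightarrow> real) \<Rightarrow> nat \<Rightarrow> real \<Rightarrow> real \<Rightarrow> (nat \<Rightarrow> real) \<Rightarrow> nat \<Rightarrow> nat \<Rightarrow> real" where
  "canon K \<alpha> l s t \<nu> k = (\<lambda>x. if x < K then
      (real K * \<alpha> t * \<nu> k * (if x = k then 1 else 0)
       + (\<alpha> t / \<alpha> s - \<alpha> t) * (if x = k then 1 else 0)
       + (\<alpha> s - \<alpha> t) * \<nu> x
       + (1 - \<alpha> t / \<alpha> s) * (1 - \<alpha> s) / real K)
      / (real K * \<alpha> t * \<nu> k + 1 - \<alpha> t)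
    else 0)"

end

theory Submission
  imports Defs
begin


lemma sched_ratio:
  assumes sch: "schedule \<alpha>" and "0 \<le> s" "s \<le> t" "t \<le> 1"
  shows "\<alpha> s * (\<alpha> t / \<alpha> s) = \<alpha> t" and "0 \<le> \<alpha> t / \<alpha> s" and "\<alpha> t / \<alpha> s \<le> 1"
proof -
  have a: "0 \<le> \<alpha> t" "\<alpha> t \<le> \<alpha> s" using sch assms unfolding schedule_def by auto
  show "\<alpha> s * (\<alpha> t / \<alpha> s) = \<alpha> t" using a by (cases "\<alpha> s = 0") auto
  show "0 \<le> \<alpha> t / \<alpha> s" using a by simp
  show "\<alpha> t / \<alpha> s \<le> 1" using a by (cases "\<alpha> s = 0") (auto simp: divide_le_eq_1)
qed

lemma qfwd_nonneg:
  assumes sch: "schedule \<alpha>" and "0 \<le> s" "s \<le> t" "t \<le> 1" and pi: "simplex K (\<pi> l)" and "y < K"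
  shows "0 \<le> qfwd \<alpha> \<pi> l s t y x"
proof -
  have "0 \<le> \<pi> l y" using pi assms unfolding simplex_def by auto
  moreover note sched_ratio[OF sch assms(2-4)]
  ultimately show ?thesis unfolding qfwd_def by (auto intro!: add_nonneg_nonneg mult_nonneg_nonneg)
qed

lemma CK_nu:
  assumes sch: "schedule \<alpha>" and "0 \<le> s" "s \<le> t" "t \<le> 1" and pi: "simplex K (\<pi> l)"
    and nu: "simplex K \<nu>" and y: "y < K"
  shows "(\<Sum>x<K. qfwd \<alpha> \<pi> l s t y x * q0 \<alpha> \<pi> l s x \<nu>) = q0 \<alpha> \<pi> l t y \<nu>"
proof -
  define r where "r = \<alpha> t / \<alpha> s"
  have r: "\<alpha> s * r = \<alpha> t" using sched_ratio[OF sch assms(2-4)] r_def by simp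
  have sp: "(\<Sum>x<K. \<pi> l x) = 1" "(\<Sum>x<K. \<nu> x) = 1" using pi nu unfolding simplex_def by auto
  have pw: "\<And>x. qfwd \<alpha> \<pi> l s t y x * q0 \<alpha> \<pi> l s x \<nu>
      = (if y = x then r * q0 \<alpha> \<pi> l s x \<nu> else 0) + ((1 - r) * \<pi> l y * \<alpha> s) * \<nu> x + ((1 - r) * \<pi> l y * (1 - \<alpha> s)) * \<pi> l x"
    unfolding qfwd_def q0_def r_def[symmetric] by (cases "y = x") (simp_all add: algebra_simps)
  have "(\<Sum>x<K. qfwd \<alpha> \<pi> l s t y x * q0 \<alpha> \<pi> l s x \<nu>)
     = (\<Sum>x<K. if y = x then r * q0 \<alpha> \<pi> l s x \<nu> else 0) + ((1 - r) * \<pi> l y * \<alpha> s) * (\<Sum>x<K. \<nu> x) + ((1 - r) * \<pi> l y * (1 - \<alpha> s)) * (\<Sum>x<K. \<pi> l x)"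
    unfolding pw sum.distrib sum_distrib_left[symmetric] by (rule refl)
  also have "\<dots> = r * q0 \<alpha> \<pi> l s y \<nu> + ((1 - r) * \<pi> l y * \<alpha> s) + ((1 - r) * \<pi> l y * (1 - \<alpha> s))"
    using y sp by simp
  also have "\<dots> = (\<alpha> s * r) * \<nu> y + (1 - \<alpha> s * r) * \<pi> l y"
    unfolding q0_def by (simp add: algebra_simps)
  finally show ?thesis unfolding r q0_def .
qed

lemma CK_point:
  assumes sch: "schedule \<alpha>" and "0 \<le> s" "s \<le> t" "t \<le> 1" and pi: "simplex K (\<pi> l)"
    and a: "a < K" and y: "y < K"
  shows "(\<Sum>x<K. qfwd \<alpha> \<pi> l 0 s x a * qfwd \<alpha> \<pi> l s t y x) = qfwd \<alpha> \<pi> l 0 t y a"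
proof -
  define d where "d = (\<lambda>j. if j = a then 1 else (0::real))"
  have a0: "\<alpha> 0 = 1" using sch unfolding schedule_def by auto
  have dS: "simplex K d"
  proof -
    have "(\<Sum>j<K. d j) = 1" unfolding d_def using a by simp
    then show ?thesis unfolding simplex_def d_def using a by auto
  qed
  have e1: "qfwd \<alpha> \<pi> l 0 s x a = q0 \<alpha> \<pi> l s x d" for x
    unfolding qfwd_def q0_def d_def a0 by simp
  have e2: "qfwd \<alpha> \<pi> l 0 t y a = q0 \<alpha> \<pi> l t y d"
    unfolding qfwd_def q0_def d_def a0 by simp
  have "(\<Sum>x<K. qfwd \<alpha> \<pi> l 0 s x a * qfwd \<alpha> \<pi> l s t y x) = (\<Sum>x<K. qfwd \<alpha> \<pi> l s t y x * q0 \<alpha> \<pi> l s x d)"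
    unfolding e1 by (simp only: mult.commute)
  also have "\<dots> = q0 \<alpha> \<pi> l t y d" by (rule CK_nu[where \<pi>=\<pi> and l=l, OF sch assms(2-4) pi dS y])
  finally show ?thesis unfolding e2 .
qed



lemma finite_seqs: "finite (seqs K L)"
  unfolding seqs_def by (simp add: finite_PiE)

lemma seqs_lt: "x \<in> seqs K L \<Longrightarrow> j < L \<Longrightarrow> x j < K"
  unfolding seqs_def by auto

lemma slice_eq:
  assumes "x < K" "l < L"
  shows "{xs\<in>seqs K L. xs l = x} = PiE {..<L} (\<lambda>j. if j = l then {x} else {..<K})"
proof (intro set_eqI iffI)
  fix xs assume "xs \<in> {xs\<in>seqs K L. xs l = x}"
  then have h: "xs \<in> PiE {..<L} (\<lambda>_. {..<K})" "xs l = x" unfolding seqs_def by auto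
  have "\<forall>j\<in>{..<L}. xs j \<in> (if j = l then {x} else {..<K})"
  proof
    fix j assume "j \<in> {..<L}"
    then show "xs j \<in> (if j = l then {x} else {..<K})" using h by (cases "j = l") auto
  qed
  then show "xs \<in> PiE {..<L} (\<lambda>j. if j = l then {x} else {..<K})"
    using h(1) by (simp add: PiE_iff)
next
  fix xs assume h: "xs \<in> PiE {..<L} (\<lambda>j. if j = l then {x} else {..<K})"
  have "PiE {..<L} (\<lambda>j. if j = l then {x} else {..<K}) \<subseteq> PiE {..<L} (\<lambda>_. {..<K})"
    by (rule PiE_mono) (use assms in auto)
  moreover have "xs l \<in> (if l = l then {x} else {..<K})" using h assms by (auto simp only: PiE_iff lessThan_iff)
  then have "xs l = x" by simp
  ultimately show "xs \<in> {xs\<in>seqs K L. xs l = x}" using h unfolding seqs_def by auto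
qed

lemma slice_sum_prod:
  fixes g :: "nat \<Rightarrow> nat \<Rightarrow> real"
  assumes "x < K" "l < L"
  shows "(\<Sum>xs\<in>{xs\<in>seqs K L. xs l = x}. \<Prod>j<L. g j (xs j)) = g l x * (\<Prod>j\<in>{..<L}-{l}. \<Sum>y<K. g j y)"
proof -
  have "(\<Sum>xs\<in>{xs\<in>seqs K L. xs l = x}. \<Prod>j<L. g j (xs j))
       = (\<Prod>j<L. \<Sum>y\<in>(if j = l then {x} else {..<K}). g j y)"
    unfolding slice_eq[OF assms] by (rule prod_sum_PiE[symmetric]) auto
  also have "\<dots> = (\<Sum>y\<in>(if l = l then {x} else {..<K}). g l y) * (\<Prod>j\<in>{..<L}-{l}. \<Sum>y\<in>(if j = l then {x} else {..<K}). g j y)"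
    using assms by (subst prod.remove[of _ l]) auto
  also have "(\<Prod>j\<in>{..<L}-{l}. \<Sum>y\<in>(if j = l then {x} else {..<K}). g j y) = (\<Prod>j\<in>{..<L}-{l}. \<Sum>y<K. g j y)"
    by (rule prod.cong) auto
  finally show ?thesis by simp
qed

lemma slice_empty:
  assumes "K \<le> x" "l < L"
  shows "{xs\<in>seqs K L. xs l = x} = {}"
  using assms seqs_lt[of _ K L l] by fastforce

lemma regroup:
  fixes f :: "(nat \<Rightarrow> nat) \<Rightarrow> real"
  assumes "l < L"
  shows "(\<Sum>x0\<in>seqs K L. f x0 * h (x0 l)) = (\<Sum>k<K. (\<Sum>x0\<in>{x0\<in>seqs K L. x0 l = k}. f x0) * h k)"
proof -
  have "(\<Sum>x0\<in>seqs K L. f x0 * h (x0 l)) = (\<Sum>k<K. \<Sum>x0\<in>{x0\<in>seqs K L. x0 l = k}. f x0 * h (x0 l))"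
    by (rule sum.group[symmetric]) (auto simp: finite_seqs seqs_lt assms)
  also have "\<dots> = (\<Sum>k<K. (\<Sum>x0\<in>{x0\<in>seqs K L. x0 l = k}. f x0) * h k)"
    by (rule sum.cong[OF refl]) (simp add: sum_distrib_right)
  finally show ?thesis .
qed



lemma qfwd0: "\<alpha> 0 = 1 \<Longrightarrow> qfwd \<alpha> \<pi> l 0 u y k = \<alpha> u * (if y = k then 1 else 0) + (1 - \<alpha> u) * \<pi> l y"
  unfolding qfwd_def by simp

lemma lin_sum:
  fixes W :: "nat \<Rightarrow> real"
  assumes "x < K"
  shows "(\<Sum>k<K. W k * (a * (if x = k then 1 else 0) + b)) = a * W x + b * (\<Sum>k<K. W k)"
proof -
  have "(\<Sum>k<K. W k * (a * (if x = k then 1 else 0) + b)) = (\<Sum>k<K. (if x = k then a * W k else 0) + b * W k)"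
    by (rule sum.cong) (auto simp: algebra_simps)
  also have "\<dots> = a * W x + b * (\<Sum>k<K. W k)"
    using assms by (simp add: sum.distrib sum_distrib_left)
  finally show ?thesis .
qed

lemma main:
  assumes dist: "is_dist K L p0" and sch: "schedule \<alpha>" and pi: "\<forall>l<L. simplex K (\<pi> l)"
    and st: "0 \<le> s" "s < t" "t \<le> 1" and l: "l < L" and xt: "xt \<in> seqs K L"
    and pos: "0 < pt K L p0 \<alpha> \<pi> t xt"
  defines "\<nu> \<equiv> loo_mean K L p0 \<alpha> \<pi> xt t l"
  shows "simplex K \<nu> \<and> 0 < q0 \<alpha> \<pi> l t (xt l) \<nu>
    \<and> (\<forall>x<K. prev K L p0 \<alpha> \<pi> l s t xt x = qfwd \<alpha> \<pi> l s t (xt l) x * q0 \<alpha> \<pi> l s x \<nu> / q0 \<alpha> \<pi> l t (xt l) \<nu>)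
    \<and> (\<forall>x. K \<le> x \<longrightarrow> prev K L p0 \<alpha> \<pi> l s t xt x = 0)"
proof -
  define S where "S = seqs K L"
  define w where "w = loo_w L p0 \<alpha> \<pi> l t xt"
  define W where "W k = (\<Sum>x0\<in>{x0\<in>S. x0 l = k}. w x0)" for k
  define Z where "Z = (\<Sum>x0\<in>S. w x0)"
  have a0: "\<alpha> 0 = 1" using sch unfolding schedule_def by auto
  have piL: "simplex K (\<pi> l)" using pi l by auto
  have finS: "finite S" unfolding S_def by (rule finite_seqs)
  have xtl: "xt j < K" if "j < L" for j using xt that seqs_lt by blast
  have qnn: "0 \<le> qfwd \<alpha> \<pi> j 0 t (xt j) (x0 j)" if "j < L" for j x0
    using qfwd_nonneg[OF sch _ _ st(3), where s=0 and K=K and \<pi>=\<pi> and l=j] st pi that xtl by auto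
  have wnn: "0 \<le> w x0" if "x0 \<in> S" for x0
  proof -
    have "0 \<le> p0 x0" using dist that unfolding is_dist_def S_def by auto
    moreover have "0 \<le> (\<Prod>j\<in>{..<L} - {l}. qfwd \<alpha> \<pi> j 0 t (xt j) (x0 j))"
      by (rule prod_nonneg) (use qnn in auto)
    ultimately show ?thesis unfolding w_def loo_w_def by simp
  qed
  have Wnn: "0 \<le> W k" for k unfolding W_def by (rule sum_nonneg) (use wnn in auto)
  have ZW: "Z = (\<Sum>k<K. W k)"
    using regroup[OF l, where K=K and f=w and h="\<lambda>_. 1"] unfolding Z_def W_def S_def by simp
  have factor: "p0 x0 * qseq L \<alpha> \<pi> 0 t xt x0 = w x0 * qfwd \<alpha> \<pi> l 0 t (xt l) (x0 l)" for x0
  proof -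
    have "qseq L \<alpha> \<pi> 0 t xt x0 = qfwd \<alpha> \<pi> l 0 t (xt l) (x0 l) * (\<Prod>j\<in>{..<L} - {l}. qfwd \<alpha> \<pi> j 0 t (xt j) (x0 j))"
      unfolding qseq_def using l by (subst prod.remove[of _ l]) auto
    then show ?thesis unfolding w_def loo_w_def by simp
  qed
  have ptW: "pt K L p0 \<alpha> \<pi> t xt = (\<Sum>k<K. W k * qfwd \<alpha> \<pi> l 0 t (xt l) k)"
    unfolding pt_def factor using regroup[OF l, where K=K and f=w and h="qfwd \<alpha> \<pi> l 0 t (xt l)"]
    unfolding W_def S_def by simp
  have Zpos: "0 < Z"
  proof (rule ccontr)
    assume "\<not> 0 < Z"
    moreover have "0 \<le> Z" unfolding ZW by (rule sum_nonneg) (use Wnn in auto)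
    ultimately have "Z = 0" by simp
    then have "\<forall>k\<in>{..<K}. W k = 0" unfolding ZW by (subst sum_nonneg_eq_0_iff[symmetric]) (auto simp: Wnn)
    then have "pt K L p0 \<alpha> \<pi> t xt = 0" unfolding ptW by simp
    then show False using pos by simp
  qed
  have nuk: "\<nu> k = W k / Z" if "k < K" for k
    using that unfolding \<nu>_def loo_mean_def loo_post_def W_def Z_def S_def w_def by simp
  have nuS: "simplex K \<nu>"
  proof -
    have "(\<Sum>k<K. \<nu> k) = (\<Sum>k<K. W k / Z)" by (rule sum.cong) (auto simp: nuk)
    also have "\<dots> = 1" using Zpos ZW by (simp add: sum_divide_distrib[symmetric])
    finally show ?thesis unfolding simplex_def using nuk Wnn Zpos
      by (auto simp: \<nu>_def loo_mean_def)
  qed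
  have q0eq: "Z * q0 \<alpha> \<pi> l u x \<nu> = \<alpha> u * W x + (1 - \<alpha> u) * \<pi> l x * Z" if "x < K" for u x
    using that Zpos unfolding q0_def by (simp add: nuk algebra_simps)
  have ptZ: "pt K L p0 \<alpha> \<pi> t xt = Z * q0 \<alpha> \<pi> l t (xt l) \<nu>"
    unfolding ptW qfwd0[where \<alpha>=\<alpha>, OF a0] lin_sum[OF xtl[OF l]] q0eq[OF xtl[OF l]] ZW[symmetric]
    by (simp add: algebra_simps)
  have q0pos: "0 < q0 \<alpha> \<pi> l t (xt l) \<nu>"
    using pos Zpos unfolding ptZ by (simp add: zero_less_mult_iff)
  have num: "(\<Sum>xs\<in>{xs\<in>S. xs l = x}. joint2 K L p0 \<alpha> \<pi> s t xs xt)
      = qfwd \<alpha> \<pi> l s t (xt l) x * (Z * q0 \<alpha> \<pi> l s x \<nu>)" if x: "x < K" for x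
  proof -
    define g where "g x0 j y = qfwd \<alpha> \<pi> j 0 s y (x0 j) * qfwd \<alpha> \<pi> j s t (xt j) y" for x0 j y
    have inner: "(\<Sum>xs\<in>{xs\<in>S. xs l = x}. qseq L \<alpha> \<pi> 0 s xs x0 * qseq L \<alpha> \<pi> s t xt xs)
        = g x0 l x * (\<Prod>j\<in>{..<L} - {l}. qfwd \<alpha> \<pi> j 0 t (xt j) (x0 j))" if x0: "x0 \<in> S" for x0
    proof -
      have "(\<Sum>xs\<in>{xs\<in>S. xs l = x}. qseq L \<alpha> \<pi> 0 s xs x0 * qseq L \<alpha> \<pi> s t xt xs)
          = (\<Sum>xs\<in>{xs\<in>S. xs l = x}. \<Prod>j<L. g x0 j (xs j))"
        unfolding qseq_def g_def by (simp add: prod.distrib)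
      also have "\<dots> = g x0 l x * (\<Prod>j\<in>{..<L}-{l}. \<Sum>y<K. g x0 j y)"
        unfolding S_def by (rule slice_sum_prod[OF x l])
      also have "(\<Prod>j\<in>{..<L}-{l}. \<Sum>y<K. g x0 j y) = (\<Prod>j\<in>{..<L} - {l}. qfwd \<alpha> \<pi> j 0 t (xt j) (x0 j))"
      proof (rule prod.cong[OF refl])
        fix j assume "j \<in> {..<L} - {l}"
        then have j: "j < L" by auto
        have "x0 j < K" using x0 j seqs_lt unfolding S_def by blast
        then show "(\<Sum>y<K. g x0 j y) = qfwd \<alpha> \<pi> j 0 t (xt j) (x0 j)"
          unfolding g_def using CK_point[OF sch st(1) less_imp_le[OF st(2)] st(3), where K=K and \<pi>=\<pi> and l=j and a="x0 j" and y="xt j"] pi j xtl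
          by auto
      qed
      finally show ?thesis .
    qed
    have "(\<Sum>xs\<in>{xs\<in>S. xs l = x}. joint2 K L p0 \<alpha> \<pi> s t xs xt)
        = (\<Sum>x0\<in>S. p0 x0 * (\<Sum>xs\<in>{xs\<in>S. xs l = x}. qseq L \<alpha> \<pi> 0 s xs x0 * qseq L \<alpha> \<pi> s t xt xs))"
      unfolding joint2_def S_def[symmetric]
      by (subst sum.swap) (simp add: sum_distrib_left mult.assoc)
    also have "\<dots> = (\<Sum>x0\<in>S. w x0 * g x0 l x)"
      by (rule sum.cong[OF refl]) (simp add: inner w_def loo_w_def)
    also have "\<dots> = (\<Sum>x0\<in>S. w x0 * (qfwd \<alpha> \<pi> l 0 s x (x0 l) * qfwd \<alpha> \<pi> l s t (xt l) x))"
      unfolding g_def by simp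
    also have "\<dots> = (\<Sum>k<K. W k * (qfwd \<alpha> \<pi> l 0 s x k * qfwd \<alpha> \<pi> l s t (xt l) x))"
      using regroup[OF l, where K=K and f=w and h="\<lambda>k. qfwd \<alpha> \<pi> l 0 s x k * qfwd \<alpha> \<pi> l s t (xt l) x"]
      unfolding W_def S_def by simp
    also have "\<dots> = qfwd \<alpha> \<pi> l s t (xt l) x * (\<Sum>k<K. W k * qfwd \<alpha> \<pi> l 0 s x k)"
      by (simp add: sum_distrib_left algebra_simps)
    also have "(\<Sum>k<K. W k * qfwd \<alpha> \<pi> l 0 s x k) = Z * q0 \<alpha> \<pi> l s x \<nu>"
      unfolding qfwd0[where \<alpha>=\<alpha>, OF a0] lin_sum[OF x] q0eq[OF x] ZW[symmetric] by (simp add: algebra_simps)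
    finally show ?thesis .
  qed
  have prevK: "prev K L p0 \<alpha> \<pi> l s t xt x = qfwd \<alpha> \<pi> l s t (xt l) x * q0 \<alpha> \<pi> l s x \<nu> / q0 \<alpha> \<pi> l t (xt l) \<nu>"
    if x: "x < K" for x
    unfolding prev_def num[OF x, unfolded S_def] ptZ using Zpos by simp
  have prev0: "prev K L p0 \<alpha> \<pi> l s t xt x = 0" if "K \<le> x" for x
    unfolding prev_def slice_empty[OF that l] by simp
  show ?thesis using nuS q0pos prevK prev0 by blast
qed



lemma gibbs_term:
  fixes p q :: real
  assumes "0 < p" "0 < q"
  shows "p - q \<le> p * ln (p / q)" and "p * ln (p / q) = p - q \<Longrightarrow> p = q"
proof -
  have l: "ln (q / p) \<le> q / p - 1" using assms by (intro ln_le_minus_one) simp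
  have lnpq: "ln (p / q) = - ln (q / p)" using assms by (simp add: ln_div)
  have e: "p * (q / p - 1) = q - p" using assms by (simp add: field_simps)
  have "p * ln (q / p) \<le> p * (q / p - 1)" using l assms by (intro mult_left_mono) auto
  then show "p - q \<le> p * ln (p / q)" unfolding lnpq e by simp
  assume "p * ln (p / q) = p - q"
  then have "p * ln (q / p) = p * (q / p - 1)" unfolding lnpq e by simp
  then have "ln (q / p) = q / p - 1" using assms by simp
  then have "q / p = 1" using assms by (intro ln_eq_minus_one) auto
  then show "p = q" using assms by simp
qed

lemma KL_facts:
  assumes p: "simplex K p" and q: "simplex K q"
  shows "0 \<le> KL K p q" and "KL K p q = 0 \<Longrightarrow> p = q"
proof -
  define P where "P = {x. x < K \<and> 0 < p x}"
  have finP: "finite P" unfolding P_def by simp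
  have PK: "P \<subseteq> {..<K}" unfolding P_def by auto
  have pnn: "0 \<le> p x" and qnn: "0 \<le> q x" for x
    using p q unfolding simplex_def by (cases "x < K"; simp)+
  have p1: "(\<Sum>x<K. p x) = 1" and q1: "(\<Sum>x<K. q x) = 1" using p q unfolding simplex_def by auto
  have p0: "p x = 0" if "x \<notin> P" for x
  proof (cases "x < K")
    case True then show ?thesis using that pnn[of x] unfolding P_def by auto
  next
    case False then show ?thesis using p unfolding simplex_def by auto
  qed
  have pP: "(\<Sum>x\<in>P. p x) = 1"
  proof -
    have "(\<Sum>x<K. p x) = (\<Sum>x\<in>P. p x)" by (rule sum.mono_neutral_right) (use PK p0 in auto)
    then show ?thesis using p1 by simp
  qed
  have qsplit: "(\<Sum>x\<in>P. q x) + (\<Sum>x\<in>{..<K} - P. q x) = 1"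
    using sum.subset_diff[OF PK, of q] q1 by simp
  have qrest: "0 \<le> (\<Sum>x\<in>{..<K} - P. q x)" by (rule sum_nonneg) (use qnn in auto)
  show "0 \<le> KL K p q"
  proof (cases "\<exists>x<K. 0 < p x \<and> q x \<le> 0")
    case True then show ?thesis unfolding KL_def by simp
  next
    case False
    then have qpos: "\<And>x. x \<in> P \<Longrightarrow> 0 < q x" unfolding P_def by auto
    have "(\<Sum>x\<in>P. p x - q x) \<le> (\<Sum>x\<in>P. p x * ln (p x / q x))"
      by (rule sum_mono) (use gibbs_term(1) qpos in \<open>auto simp: P_def\<close>)
    moreover have "(\<Sum>x\<in>P. p x - q x) \<ge> 0" unfolding sum_subtractf pP using qsplit qrest by simp
    ultimately show ?thesis unfolding KL_def using False P_def by simp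
  qed
  assume K0: "KL K p q = 0"
  have F: "\<not> (\<exists>x<K. 0 < p x \<and> q x \<le> 0)"
  proof
    assume "\<exists>x<K. 0 < p x \<and> q x \<le> 0"
    then have "KL K p q = \<infinity>" unfolding KL_def by simp
    then show False using K0 by simp
  qed
  then have qpos: "\<And>x. x \<in> P \<Longrightarrow> 0 < q x" unfolding P_def by auto
  have S0: "(\<Sum>x\<in>P. p x * ln (p x / q x)) = 0" using K0 F unfolding KL_def P_def by simp
  define f where "f x = p x * ln (p x / q x) - (p x - q x)" for x
  have fnn: "\<And>x. x \<in> P \<Longrightarrow> 0 \<le> f x" unfolding f_def using gibbs_term(1) qpos by (simp add: P_def)
  have "(\<Sum>x\<in>P. f x) = 0 - (1 - (\<Sum>x\<in>P. q x))" unfolding f_def sum_subtractf S0 pP by simp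
  moreover have "0 \<le> (\<Sum>x\<in>P. f x)" by (rule sum_nonneg) (use fnn in auto)
  ultimately have sq: "(\<Sum>x\<in>P. q x) = 1" and sf: "(\<Sum>x\<in>P. f x) = 0" using qsplit qrest by linarith+
  have fz: "\<forall>x\<in>P. f x = 0" using sf sum_nonneg_eq_0_iff[OF finP, of f] fnn by auto
  have eqP: "p x = q x" if "x \<in> P" for x
  proof -
    have "0 < p x" using that unfolding P_def by auto
    moreover have "p x * ln (p x / q x) = p x - q x" using fz that unfolding f_def by auto
    ultimately show ?thesis using gibbs_term(2) qpos that by blast
  qed
  have rest0: "(\<Sum>x\<in>{..<K} - P. q x) = 0" using qsplit sq by simp
  have qz: "\<forall>x\<in>{..<K} - P. q x = 0"
    using rest0 sum_nonneg_eq_0_iff[of "{..<K} - P" q] qnn by auto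
  show "p = q"
  proof
    fix x
    show "p x = q x"
    proof (cases "x < K")
      case True
      then show ?thesis using eqP qz p0 by (cases "x \<in> P") auto
    next
      case False
      then show ?thesis using p q unfolding simplex_def by auto
    qed
  qed
qed

lemma KL_self:
  assumes "simplex K p" shows "KL K p p = 0"
  unfolding KL_def by simp

lemma grid_mono:
  assumes g: "grid n tg" and "i \<le> j" "j \<le> n"
  shows "tg i \<le> tg j"
  using assms(2,3)
proof (induction j rule: dec_induct)
  case base then show ?case by simp
next
  case (step m)
  then have "tg m < tg (Suc m)" using g unfolding grid_def by auto
  then show ?case using step by simp
qed

lemma grid_props:
  assumes g: "grid n tg" and i: "i \<in> {1..n}"
  shows "0 \<le> tg (i - 1)" "tg (i - 1) < tg i" "tg i \<le> 1" "0 \<le> tg i"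
proof -
  have g0: "tg 0 = 0" "tg n = 1" using g unfolding grid_def by auto
  show "0 \<le> tg (i - 1)" using grid_mono[OF g, of 0 "i - 1"] i g0 by auto
  have "i - 1 < n" "Suc (i - 1) = i" using i by auto
  then show "tg (i - 1) < tg i" using g unfolding grid_def by metis
  show "tg i \<le> 1" using grid_mono[OF g, of i n] i g0 by auto
  show "0 \<le> tg i" using grid_mono[OF g, of 0 i] i g0 by auto
qed



lemma ereal_sum_nonneg_0:
  fixes f :: "'a \<Rightarrow> ereal"
  assumes "finite A" "\<And>x. x \<in> A \<Longrightarrow> 0 \<le> f x" "sum f A = 0" "x \<in> A"
  shows "f x = 0"
  using sum_nonneg_eq_0_iff[of A f] assms by auto

lemma J_lemma:
  assumes g: "grid n tg"
   and hprev: "\<And>i l x. i \<in> {1..n} \<Longrightarrow> l < L \<Longrightarrow> x \<in> seqs K L \<Longrightarrow> 0 < pt K L p0 \<alpha> \<pi> (tg i) x \<Longrightarrow>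
        prev K L p0 \<alpha> \<pi> l (tg (i-1)) (tg i) x = br l (tg (i-1)) (tg i) (loo_mean K L p0 \<alpha> \<pi> x (tg i) l) (x l)
        \<and> simplex K (prev K L p0 \<alpha> \<pi> l (tg (i-1)) (tg i) x)"
   and hd: "\<And>i l x. i \<in> {1..n} \<Longrightarrow> l < L \<Longrightarrow> x \<in> seqs K L \<Longrightarrow> 0 < pt K L p0 \<alpha> \<pi> (tg i) x \<Longrightarrow>
        simplex K (br l (tg (i-1)) (tg i) (d x (tg i) l) (x l))"
  shows "Jobj K L p0 \<alpha> \<pi> br n tg (loo_mean K L p0 \<alpha> \<pi>) = 0"
    and "0 \<le> Jobj K L p0 \<alpha> \<pi> br n tg d"
    and "Jobj K L p0 \<alpha> \<pi> br n tg d \<le> 0 \<Longrightarrow> (\<forall>i\<in>{1..n}. \<forall>l<L. \<forall>x\<in>seqs K L. 0 < pt K L p0 \<alpha> \<pi> (tg i) x \<longrightarrow>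
        prev K L p0 \<alpha> \<pi> l (tg (i-1)) (tg i) x = br l (tg (i-1)) (tg i) (d x (tg i) l) (x l))"
proof -
  define X where "X i = {x\<in>seqs K L. 0 < pt K L p0 \<alpha> \<pi> (tg i) x}" for i
  define T where "T i l x = ereal (pt K L p0 \<alpha> \<pi> (tg i) x) *
        KL K (prev K L p0 \<alpha> \<pi> l (tg (i - 1)) (tg i) x) (br l (tg (i - 1)) (tg i) (d x (tg i) l) (x l))" for i l x
  have finX: "finite (X i)" for i unfolding X_def using finite_seqs by simp
  have J: "Jobj K L p0 \<alpha> \<pi> br n tg d = (\<Sum>i\<in>{1..n}. \<Sum>l<L. \<Sum>x\<in>X i. T i l x)"
    unfolding Jobj_def X_def T_def by simp
  have Tnn: "0 \<le> T i l x" if "i \<in> {1..n}" "l < L" "x \<in> X i" for i l x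
  proof -
    have "0 \<le> KL K (prev K L p0 \<alpha> \<pi> l (tg (i - 1)) (tg i) x) (br l (tg (i - 1)) (tg i) (d x (tg i) l) (x l))"
    proof (rule KL_facts(1))
      have x: "x \<in> seqs K L" "0 < pt K L p0 \<alpha> \<pi> (tg i) x" using that unfolding X_def by auto
      show "simplex K (prev K L p0 \<alpha> \<pi> l (tg (i - 1)) (tg i) x)" using hprev[OF that(1,2) x] by blast
      show "simplex K (br l (tg (i - 1)) (tg i) (d x (tg i) l) (x l))" using hd[OF that(1,2) x] .
    qed
    moreover have "0 \<le> ereal (pt K L p0 \<alpha> \<pi> (tg i) x)" using that unfolding X_def by auto
    ultimately show ?thesis unfolding T_def by simp
  qed
  have S2nn: "0 \<le> (\<Sum>x\<in>X i. T i l x)" if "i \<in> {1..n}" "l < L" for i l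
    by (rule sum_nonneg) (use Tnn that in auto)
  have S1nn: "0 \<le> (\<Sum>l<L. \<Sum>x\<in>X i. T i l x)" if "i \<in> {1..n}" for i
    by (rule sum_nonneg) (use S2nn that in auto)
  show J0: "0 \<le> Jobj K L p0 \<alpha> \<pi> br n tg d" unfolding J
    by (rule sum_nonneg) (use S1nn in auto)
  show "Jobj K L p0 \<alpha> \<pi> br n tg (loo_mean K L p0 \<alpha> \<pi>) = 0"
    unfolding Jobj_def
  proof (intro sum.neutral ballI)
    fix i l x assume i: "i \<in> {1..n}" and l: "l \<in> {..<L}" and x: "x \<in> {x\<in>seqs K L. 0 < pt K L p0 \<alpha> \<pi> (tg i) x}"
    have "KL K (prev K L p0 \<alpha> \<pi> l (tg (i - 1)) (tg i) x) (br l (tg (i - 1)) (tg i) (loo_mean K L p0 \<alpha> \<pi> x (tg i) l) (x l)) = 0"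
      using hprev[of i l x] i l x KL_self by auto
    then show "ereal (pt K L p0 \<alpha> \<pi> (tg i) x) *
        KL K (prev K L p0 \<alpha> \<pi> l (tg (i - 1)) (tg i) x) (br l (tg (i - 1)) (tg i) (loo_mean K L p0 \<alpha> \<pi> x (tg i) l) (x l)) = 0"
      by simp
  qed
  assume Jle: "Jobj K L p0 \<alpha> \<pi> br n tg d \<le> 0"
  then have Jz: "(\<Sum>i\<in>{1..n}. \<Sum>l<L. \<Sum>x\<in>X i. T i l x) = 0" using J0 J by simp
  show "\<forall>i\<in>{1..n}. \<forall>l<L. \<forall>x\<in>seqs K L. 0 < pt K L p0 \<alpha> \<pi> (tg i) x \<longrightarrow>
        prev K L p0 \<alpha> \<pi> l (tg (i-1)) (tg i) x = br l (tg (i-1)) (tg i) (d x (tg i) l) (x l)"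
  proof (intro ballI allI impI)
    fix i l x assume i: "i \<in> {1..n}" and l: "l < L" and x: "x \<in> seqs K L" and pos: "0 < pt K L p0 \<alpha> \<pi> (tg i) x"
    have xX: "x \<in> X i" unfolding X_def using x pos by simp
    have z1: "(\<Sum>l<L. \<Sum>x\<in>X i. T i l x) = 0"
      by (rule ereal_sum_nonneg_0[OF _ _ Jz i]) (use S1nn in auto)
    have z2: "(\<Sum>x\<in>X i. T i l x) = 0"
      by (rule ereal_sum_nonneg_0[OF _ _ z1]) (use S2nn i l in auto)
    have "T i l x = 0"
      by (rule ereal_sum_nonneg_0[OF _ _ z2 xX]) (use finX Tnn i l in auto)
    then have "KL K (prev K L p0 \<alpha> \<pi> l (tg (i - 1)) (tg i) x) (br l (tg (i - 1)) (tg i) (d x (tg i) l) (x l)) = 0"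
      unfolding T_def using pos by simp
    then show "prev K L p0 \<alpha> \<pi> l (tg (i-1)) (tg i) x = br l (tg (i-1)) (tg i) (d x (tg i) l) (x l)"
      using KL_facts(2) hprev[OF i l x pos] hd[OF i l x pos] by blast
  qed
qed



lemma alg_gen:
  fixes Kr D X N :: real
  assumes "0 < Kr" "Kr * N = X"
  shows "X / D = N / (D / Kr)"
  using assms by (simp add: field_simps)

lemma alg1:
  fixes Kr a r u :: real
  assumes "0 < Kr" "0 < a" "0 < Kr * (a * r) * u + 1 - a * r"
  shows "(Kr * (a * r) * u + (r - a * r) + (a - a * r) * u + (1 - r) * (1 - a) / Kr) / (Kr * (a * r) * u + 1 - a * r)
       = (r + (1 - r) * (1 / Kr)) * (a * u + (1 - a) * (1 / Kr)) / ((a * r) * u + (1 - a * r) * (1 / Kr))"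
proof -
  have d: "(a * r) * u + (1 - a * r) * (1 / Kr) = (Kr * (a * r) * u + 1 - a * r) / Kr"
    using assms by (simp add: field_simps)
  have n: "Kr * ((r + (1 - r) * (1 / Kr)) * (a * u + (1 - a) * (1 / Kr))) = Kr * (a * r) * u + (r - a * r) + (a - a * r) * u + (1 - r) * (1 - a) / Kr"
    using assms by (simp add: field_simps)
  show ?thesis unfolding d by (rule alg_gen[OF assms(1) n])
qed

lemma alg2:
  fixes Kr a r u v :: real
  assumes "0 < Kr" "0 < a" "0 < Kr * (a * r) * u + 1 - a * r"
  shows "((a - a * r) * v + (1 - r) * (1 - a) / Kr) / (Kr * (a * r) * u + 1 - a * r)
       = ((1 - r) * (1 / Kr)) * (a * v + (1 - a) * (1 / Kr)) / ((a * r) * u + (1 - a * r) * (1 / Kr))"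
proof -
  have d: "(a * r) * u + (1 - a * r) * (1 / Kr) = (Kr * (a * r) * u + 1 - a * r) / Kr"
    using assms by (simp add: field_simps)
  have n: "Kr * (((1 - r) * (1 / Kr)) * (a * v + (1 - a) * (1 / Kr))) = (a - a * r) * v + (1 - r) * (1 - a) / Kr"
    using assms by (simp add: field_simps)
  show ?thesis unfolding d by (rule alg_gen[OF assms(1) n])
qed

lemma canon_form:
  assumes K: "0 < K" and as: "0 < \<alpha> s" and at: "0 \<le> \<alpha> t" "\<alpha> t < 1"
    and nu: "simplex K \<nu>" and k: "k < K" and x: "x < K"
  shows "canon K \<alpha> l s t \<nu> k x = qfwd \<alpha> (unif K) l s t k x * q0 \<alpha> (unif K) l s x \<nu> / q0 \<alpha> (unif K) l t k \<nu>"
proof -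
  define a where "a = \<alpha> s"
  define r where "r = \<alpha> t / \<alpha> s"
  have t: "\<alpha> t = a * r" using as by (simp add: a_def r_def)
  have rr: "\<alpha> t / \<alpha> s = r" by (simp add: r_def)
  have a0: "0 < a" using as a_def by simp
  have nk: "0 \<le> \<nu> k" using nu k unfolding simplex_def by auto
  have Kr: "0 < real K" using K by simp
  have D: "0 < real K * (a * r) * \<nu> k + 1 - a * r"
  proof -
    have "0 \<le> real K * (a * r) * \<nu> k" using at nk K t by simp
    then show ?thesis using at t by simp
  qed
  show ?thesis
  proof (cases "x = k")
    case True
    have "canon K \<alpha> l s t \<nu> k x = (real K * (a * r) * \<nu> k + (r - a * r) + (a - a * r) * \<nu> k + (1 - r) * (1 - a) / real K) / (real K * (a * r) * \<nu> k + 1 - a * r)"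
      unfolding canon_def rr using x True by (simp add: t a_def)
    also have "\<dots> = (r + (1 - r) * (1 / real K)) * (a * \<nu> k + (1 - a) * (1 / real K)) / ((a * r) * \<nu> k + (1 - a * r) * (1 / real K))"
      by (rule alg1[OF Kr a0 D])
    also have "\<dots> = qfwd \<alpha> (unif K) l s t k x * q0 \<alpha> (unif K) l s x \<nu> / q0 \<alpha> (unif K) l t k \<nu>"
      unfolding qfwd_def q0_def unif_def rr using x k True by (simp add: t a_def)
    finally show ?thesis .
  next
    case False
    have "canon K \<alpha> l s t \<nu> k x = ((a - a * r) * \<nu> x + (1 - r) * (1 - a) / real K) / (real K * (a * r) * \<nu> k + 1 - a * r)"
      unfolding canon_def rr using x False by (simp add: t a_def)
    also have "\<dots> = ((1 - r) * (1 / real K)) * (a * \<nu> x + (1 - a) * (1 / real K)) / ((a * r) * \<nu> k + (1 - a * r) * (1 / real K))"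
      by (rule alg2[OF Kr a0 D])
    also have "\<dots> = qfwd \<alpha> (unif K) l s t k x * q0 \<alpha> (unif K) l s x \<nu> / q0 \<alpha> (unif K) l t k \<nu>"
      unfolding qfwd_def q0_def unif_def rr using x k False by (simp add: t a_def)
    finally show ?thesis .
  qed
qed



lemma unif_simplex: "0 < K \<Longrightarrow> simplex K (unif K l)"
  unfolding simplex_def unif_def by simp

lemma bf_unif:
  assumes x: "x < K" and k: "k < K" and as: "0 < \<alpha> s"
  shows "qfwd \<alpha> (unif K) l s t k x * q0 \<alpha> (unif K) l s x \<nu> / q0 \<alpha> (unif K) l t k \<nu>
    = ((\<alpha> t / \<alpha> s) * (if k = x then 1 else 0) + (1 - \<alpha> t / \<alpha> s) * (1 / real K)) * (\<alpha> s * \<nu> x + (1 - \<alpha> s) * (1 / real K))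
      / (\<alpha> s * (\<alpha> t / \<alpha> s) * \<nu> k + (1 - \<alpha> s * (\<alpha> t / \<alpha> s)) * (1 / real K))"
  unfolding qfwd_def q0_def unif_def using x k as by simp

lemma ring1:
  fixes a r p p' c1 c2 :: real
  shows "(a * p + c1) * (a * r * p' + c2) - (a * p' + c1) * (a * r * p + c2) = a * (c2 - c1 * r) * (p - p')"
  by (simp add: algebra_simps)

lemma bf_inj:
  assumes K: "0 < K" and as: "0 < \<alpha> s" and at: "0 \<le> \<alpha> t" "\<alpha> t < \<alpha> s" "\<alpha> t < 1"
    and nu: "simplex K \<nu>" and nu': "simplex K \<nu>'" and k: "k < K"
    and eq: "\<forall>x<K. qfwd \<alpha> (unif K) l s t k x * q0 \<alpha> (unif K) l s x \<nu> / q0 \<alpha> (unif K) l t k \<nu>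
                  = qfwd \<alpha> (unif K) l s t k x * q0 \<alpha> (unif K) l s x \<nu>' / q0 \<alpha> (unif K) l t k \<nu>'"
  shows "\<nu> = \<nu>'"
proof -
  define a where "a = \<alpha> s"
  define r where "r = \<alpha> t / \<alpha> s"
  define c1 where "c1 = (1 - a) * (1 / real K)"
  define c2 where "c2 = (1 - a * r) * (1 / real K)"
  have a0: "0 < a" using as a_def by simp
  have ar: "a * r = \<alpha> t" using as by (simp add: a_def r_def)
  have r0: "0 \<le> r" "r < 1" using as at by (auto simp: r_def)
  have Kr: "0 < real K" using K by simp
  have nnn: "0 \<le> \<nu> j" "0 \<le> \<nu>' j" for j using nu nu' unfolding simplex_def by (cases "j < K"; auto)+
  have c2pos: "0 < c2" unfolding c2_def using ar at Kr by simp
  have Dpos: "0 < a * r * \<nu> k + c2" "0 < a * r * \<nu>' k + c2"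
    using c2pos ar at nnn[of k] by (auto intro!: add_nonneg_pos)
  have E: "(r * (if k = x then 1 else 0) + (1 - r) * (1 / real K)) * (a * \<nu> x + c1) / (a * r * \<nu> k + c2)
        = (r * (if k = x then 1 else 0) + (1 - r) * (1 / real K)) * (a * \<nu>' x + c1) / (a * r * \<nu>' k + c2)"
    if "x < K" for x
  proof -
    have e0: "qfwd \<alpha> (unif K) l s t k x * q0 \<alpha> (unif K) l s x \<nu> / q0 \<alpha> (unif K) l t k \<nu>
                  = qfwd \<alpha> (unif K) l s t k x * q0 \<alpha> (unif K) l s x \<nu>' / q0 \<alpha> (unif K) l t k \<nu>'"
      using eq that by blast
    show ?thesis using e0 unfolding bf_unif[where \<alpha>=\<alpha> and s=s and t=t and l=l, OF that k as]
      unfolding r_def[symmetric] unfolding a_def[symmetric] unfolding c1_def[symmetric] c2_def[symmetric] .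
  qed
  have ck: "0 < r + (1 - r) * (1 / real K)" using r0 Kr by (simp add: add_nonneg_pos)
  have "(a * \<nu> k + c1) / (a * r * \<nu> k + c2) = (a * \<nu>' k + c1) / (a * r * \<nu>' k + c2)"
  proof -
    define c where "c = r + (1 - r) * (1 / real K)"
    have h: "r * (if k = k then 1 else 0) + (1 - r) * (1 / real K) = c" unfolding c_def by simp
    have "c * ((a * \<nu> k + c1) / (a * r * \<nu> k + c2)) = c * ((a * \<nu>' k + c1) / (a * r * \<nu>' k + c2))"
      using E[OF k] unfolding h by (simp only: times_divide_eq_right)
    moreover have "c \<noteq> 0" using ck unfolding c_def by simp
    ultimately show ?thesis using mult_left_cancel by blast
  qed
  then have "(a * \<nu> k + c1) * (a * r * \<nu>' k + c2) = (a * \<nu>' k + c1) * (a * r * \<nu> k + c2)"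
    using Dpos by (simp add: frac_eq_eq)
  then have "a * (c2 - c1 * r) * (\<nu> k - \<nu>' k) = 0" using ring1[of a "\<nu> k" c1 r "\<nu>' k" c2] by simp
  moreover have "c2 - c1 * r = (1 - r) / real K" unfolding c1_def c2_def using Kr by (simp add: field_simps)
  ultimately have kk: "\<nu> k = \<nu>' k" using a0 r0 Kr by simp
  show ?thesis
  proof
    fix x
    show "\<nu> x = \<nu>' x"
    proof (cases "x < K")
      case False then show ?thesis using nu nu' unfolding simplex_def by auto
    next
      case True
      show ?thesis
      proof (cases "x = k")
        case True then show ?thesis using kk by simp
      next
        case False
        have "(1 - r) * (1 / real K) * (a * \<nu> x + c1) / (a * r * \<nu> k + c2)
            = (1 - r) * (1 / real K) * (a * \<nu>' x + c1) / (a * r * \<nu> k + c2)"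
          using E[OF True] False kk by simp
        then have "(1 - r) * (1 / real K) * (a * \<nu> x + c1) = (1 - r) * (1 / real K) * (a * \<nu>' x + c1)"
          using Dpos(1) by (simp add: divide_cancel_right)
        then show ?thesis using r0 Kr a0 by simp
      qed
    qed
  qed
qed



lemma q0_unif_pos:
  assumes K: "0 < K" and at: "0 \<le> \<alpha> t" "\<alpha> t < 1" and nu: "simplex K \<nu>" and k: "k < K"
  shows "0 < q0 \<alpha> (unif K) l t k \<nu>"
proof -
  have "0 \<le> \<nu> k" using nu k unfolding simplex_def by auto
  then have "0 \<le> \<alpha> t * \<nu> k" using at by simp
  moreover have "0 < (1 - \<alpha> t) * unif K l k" using at K k unfolding unif_def by simp
  ultimately show ?thesis unfolding q0_def by simp
qed

lemma canon_eq:
  assumes sch: "schedule \<alpha>" and K: "0 < K" and as: "0 < \<alpha> s" and at: "\<alpha> t < 1"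
    and st: "0 \<le> s" "s < t" "t \<le> 1" and nu: "simplex K \<nu>" and k: "k < K"
  shows "canon K \<alpha> l s t \<nu> k = (\<lambda>x. if x < K then qfwd \<alpha> (unif K) l s t k x * q0 \<alpha> (unif K) l s x \<nu> / q0 \<alpha> (unif K) l t k \<nu> else 0)"
proof
  fix x
  have at0: "0 \<le> \<alpha> t" using sch st unfolding schedule_def by auto
  show "canon K \<alpha> l s t \<nu> k x = (if x < K then qfwd \<alpha> (unif K) l s t k x * q0 \<alpha> (unif K) l s x \<nu> / q0 \<alpha> (unif K) l t k \<nu> else 0)"
  proof (cases "x < K")
    case True then show ?thesis using canon_form[where \<alpha>=\<alpha> and s=s and t=t and l=l, OF K as at0 at nu k True] by simp
  next
    case False then show ?thesis unfolding canon_def by simp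
  qed
qed

lemma canon_simplex:
  assumes sch: "schedule \<alpha>" and K: "0 < K" and as: "0 < \<alpha> s" and at: "\<alpha> t < 1"
    and st: "0 \<le> s" "s < t" "t \<le> 1" and nu: "simplex K \<nu>" and k: "k < K"
  shows "simplex K (canon K \<alpha> l s t \<nu> k)"
proof -
  have at0: "0 \<le> \<alpha> t" and as1: "\<alpha> s \<le> 1" using sch st unfolding schedule_def by auto
  have us: "simplex K (unif K l)" using unif_simplex[OF K] .
  have qp: "0 < q0 \<alpha> (unif K) l t k \<nu>" by (rule q0_unif_pos[where \<alpha>=\<alpha> and t=t and l=l, OF K at0 at nu k])
  have nn: "0 \<le> qfwd \<alpha> (unif K) l s t k x * q0 \<alpha> (unif K) l s x \<nu> / q0 \<alpha> (unif K) l t k \<nu>" if "x < K" for x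
  proof -
    have "0 \<le> qfwd \<alpha> (unif K) l s t k x" by (rule qfwd_nonneg[where \<pi>="unif K" and l=l, OF sch st(1) less_imp_le[OF st(2)] st(3) us k])
    moreover have "0 \<le> q0 \<alpha> (unif K) l s x \<nu>"
      using nu that as as1 K unfolding q0_def unif_def simplex_def by simp
    ultimately show ?thesis using qp by simp
  qed
  have "(\<Sum>x<K. qfwd \<alpha> (unif K) l s t k x * q0 \<alpha> (unif K) l s x \<nu> / q0 \<alpha> (unif K) l t k \<nu>)
     = (\<Sum>x<K. qfwd \<alpha> (unif K) l s t k x * q0 \<alpha> (unif K) l s x \<nu>) / q0 \<alpha> (unif K) l t k \<nu>"
    by (simp add: sum_divide_distrib)
  also have "\<dots> = 1"
    using CK_nu[where \<pi>="unif K" and l=l, OF sch st(1) less_imp_le[OF st(2)] st(3) us nu k] qp by simp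
  finally have s1: "(\<Sum>x<K. qfwd \<alpha> (unif K) l s t k x * q0 \<alpha> (unif K) l s x \<nu> / q0 \<alpha> (unif K) l t k \<nu>) = 1" .
  show ?thesis unfolding canon_eq[where \<alpha>=\<alpha> and s=s and t=t and l=l, OF sch K as at st nu k] simplex_def using nn s1 by simp
qed



theorem proposition1:
  fixes K L :: nat and p0 :: "(nat \<Rightarrow> nat) \<Rightarrow> real" and \<alpha> :: "real \<Rightarrow> real"
  assumes "2 \<le> K" and "1 \<le> L" and "is_dist K L p0" and "schedule \<alpha>"
  shows
   "(\<forall>\<pi> br. (\<forall>l<L. simplex K (\<pi> l)) \<longrightarrow> bridge_ext K L br \<longrightarrow> A1 K L \<alpha> \<pi> br \<longrightarrow>
       \<comment> \<open>(i)\<close>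
       (\<forall>s t l xt. 0 \<le> s \<longrightarrow> s < t \<longrightarrow> t \<le> 1 \<longrightarrow> l < L \<longrightarrow> xt \<in> seqs K L \<longrightarrow>
          0 < pt K L p0 \<alpha> \<pi> t xt \<longrightarrow>
          prev K L p0 \<alpha> \<pi> l s t xt = br l s t (loo_mean K L p0 \<alpha> \<pi> xt t l) (xt l))
     \<and> \<comment> \<open>(ii)\<close>
       (\<forall>n tg d. grid n tg \<longrightarrow> predictor K L d \<longrightarrow>
          Jobj K L p0 \<alpha> \<pi> br n tg (loo_mean K L p0 \<alpha> \<pi>) \<le> Jobj K L p0 \<alpha> \<pi> br n tg d))
   \<and> \<comment> \<open>(iii) UDM\<close>
   ((\<forall>s t. 0 \<le> s \<longrightarrow> s < t \<longrightarrow> t \<le> 1 \<longrightarrow> \<alpha> t < \<alpha> s) \<longrightarrow> \<alpha> 0 = 1 \<longrightarrow>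
    (\<forall>t. 0 < t \<longrightarrow> t \<le> 1 \<longrightarrow> 0 < \<alpha> t \<and> \<alpha> t < 1) \<longrightarrow>
      (\<forall>l s t k \<nu> \<nu>'. l < L \<longrightarrow> 0 < s \<longrightarrow> s < t \<longrightarrow> t \<le> 1 \<longrightarrow> k < K \<longrightarrow>
          simplex K \<nu> \<longrightarrow> simplex K \<nu>' \<longrightarrow> canon K \<alpha> l s t \<nu> k = canon K \<alpha> l s t \<nu>' k \<longrightarrow> \<nu> = \<nu>')
    \<and> (\<forall>l s t xt \<nu>. l < L \<longrightarrow> 0 < s \<longrightarrow> s < t \<longrightarrow> t \<le> 1 \<longrightarrow> xt \<in> seqs K L \<longrightarrow>
          0 < pt K L p0 \<alpha> (unif K) t xt \<longrightarrow> simplex K \<nu> \<longrightarrow>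
          canon K \<alpha> l s t \<nu> (xt l) = prev K L p0 \<alpha> (unif K) l s t xt \<longrightarrow>
          \<nu> = loo_mean K L p0 \<alpha> (unif K) xt t l)
    \<and> (\<forall>n tg d. grid n tg \<longrightarrow> predictor K L d \<longrightarrow>
          Jobj K L p0 \<alpha> (unif K) (canon K \<alpha>) n tg d \<le> Jobj K L p0 \<alpha> (unif K) (canon K \<alpha>) n tg (loo_mean K L p0 \<alpha> (unif K)) \<longrightarrow>
          (\<forall>i\<in>{1..n}. 0 < tg (i - 1) \<longrightarrow> (\<forall>l<L. \<forall>x\<in>seqs K L.
             0 < pt K L p0 \<alpha> (unif K) (tg i) x \<longrightarrow> d x (tg i) l = loo_mean K L p0 \<alpha> (unif K) x (tg i) l))))"
proof -
  have a0: "\<alpha> 0 = 1" using assms(4) unfolding schedule_def by auto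
  have K0: "0 < K" using assms(1) by simp
  note sch = assms(4)
  note dist = assms(3)
  have P12: "\<forall>\<pi> br. (\<forall>l<L. simplex K (\<pi> l)) \<longrightarrow> bridge_ext K L br \<longrightarrow> A1 K L \<alpha> \<pi> br \<longrightarrow>
       (\<forall>s t l xt. 0 \<le> s \<longrightarrow> s < t \<longrightarrow> t \<le> 1 \<longrightarrow> l < L \<longrightarrow> xt \<in> seqs K L \<longrightarrow>
          0 < pt K L p0 \<alpha> \<pi> t xt \<longrightarrow>
          prev K L p0 \<alpha> \<pi> l s t xt = br l s t (loo_mean K L p0 \<alpha> \<pi> xt t l) (xt l))
     \<and> (\<forall>n tg d. grid n tg \<longrightarrow> predictor K L d \<longrightarrow>
          Jobj K L p0 \<alpha> \<pi> br n tg (loo_mean K L p0 \<alpha> \<pi>) \<le> Jobj K L p0 \<alpha> \<pi> br n tg d)"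
  proof (rule allI, rule allI, rule impI, rule impI, rule impI, rule conjI)
    fix \<pi> br
    assume pi: "\<forall>l<L. simplex K (\<pi> l)" and be: "bridge_ext K L br" and a1: "A1 K L \<alpha> \<pi> br"
    have I: "prev K L p0 \<alpha> \<pi> l s t xt = br l s t (loo_mean K L p0 \<alpha> \<pi> xt t l) (xt l)
          \<and> simplex K (prev K L p0 \<alpha> \<pi> l s t xt)"
      if st: "0 \<le> s" "s < t" "t \<le> 1" and l: "l < L" and xt: "xt \<in> seqs K L" and pos: "0 < pt K L p0 \<alpha> \<pi> t xt"
      for s t l xt
    proof -
      define \<nu> where "\<nu> = loo_mean K L p0 \<alpha> \<pi> xt t l"
      have M: "simplex K \<nu> \<and> 0 < q0 \<alpha> \<pi> l t (xt l) \<nu>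
        \<and> (\<forall>x<K. prev K L p0 \<alpha> \<pi> l s t xt x = qfwd \<alpha> \<pi> l s t (xt l) x * q0 \<alpha> \<pi> l s x \<nu> / q0 \<alpha> \<pi> l t (xt l) \<nu>)
        \<and> (\<forall>x. K \<le> x \<longrightarrow> prev K L p0 \<alpha> \<pi> l s t xt x = 0)"
        unfolding \<nu>_def by (rule main[OF dist sch pi st l xt pos])
      have xtl: "xt l < K" using seqs_lt[OF xt l] .
      have bs: "simplex K (br l s t \<nu> (xt l))" using be l st M xtl unfolding bridge_ext_def by blast
      have eq: "prev K L p0 \<alpha> \<pi> l s t xt = br l s t \<nu> (xt l)"
      proof
        fix x
        show "prev K L p0 \<alpha> \<pi> l s t xt x = br l s t \<nu> (xt l) x"
        proof (cases "x < K")
          case True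
          have "br l s t \<nu> (xt l) x = qfwd \<alpha> \<pi> l s t (xt l) x * q0 \<alpha> \<pi> l s x \<nu> / q0 \<alpha> \<pi> l t (xt l) \<nu>"
            using a1 l st True xtl M unfolding A1_def by blast
          then show ?thesis using M True by simp
        next
          case False
          then show ?thesis using M bs unfolding simplex_def by auto
        qed
      qed
      show ?thesis using eq bs unfolding \<nu>_def by simp
    qed
    show "\<forall>s t l xt. 0 \<le> s \<longrightarrow> s < t \<longrightarrow> t \<le> 1 \<longrightarrow> l < L \<longrightarrow> xt \<in> seqs K L \<longrightarrow>
          0 < pt K L p0 \<alpha> \<pi> t xt \<longrightarrow>
          prev K L p0 \<alpha> \<pi> l s t xt = br l s t (loo_mean K L p0 \<alpha> \<pi> xt t l) (xt l)"
      using I by blast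
    show "\<forall>n tg d. grid n tg \<longrightarrow> predictor K L d \<longrightarrow>
          Jobj K L p0 \<alpha> \<pi> br n tg (loo_mean K L p0 \<alpha> \<pi>) \<le> Jobj K L p0 \<alpha> \<pi> br n tg d"
    proof (intro allI impI)
      fix n tg d assume g: "grid n tg" and pd: "predictor K L d"
      have hprev: "prev K L p0 \<alpha> \<pi> l (tg (i-1)) (tg i) x = br l (tg (i-1)) (tg i) (loo_mean K L p0 \<alpha> \<pi> x (tg i) l) (x l)
        \<and> simplex K (prev K L p0 \<alpha> \<pi> l (tg (i-1)) (tg i) x)"
        if "i \<in> {1..n}" "l < L" "x \<in> seqs K L" "0 < pt K L p0 \<alpha> \<pi> (tg i) x" for i l x
      proof -
        note st = grid_props(1,2,3)[OF g that(1)]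
        show ?thesis by (rule I[OF st that(2) that(3) that(4)])
      qed
      have hd: "simplex K (br l (tg (i-1)) (tg i) (d x (tg i) l) (x l))"
        if i: "i \<in> {1..n}" and l: "l < L" and x: "x \<in> seqs K L" and "0 < pt K L p0 \<alpha> \<pi> (tg i) x" for i l x
      proof -
        have "simplex K (d x (tg i) l)" using pd x l grid_props(3,4)[OF g i] unfolding predictor_def by auto
        then show ?thesis using be l grid_props(1,2,3)[OF g i] seqs_lt[OF x l] unfolding bridge_ext_def by blast
      qed
      have "Jobj K L p0 \<alpha> \<pi> br n tg (loo_mean K L p0 \<alpha> \<pi>) = 0"
        by (rule J_lemma(1)[of n tg L K p0 \<alpha> \<pi> br d, OF g hprev hd])
      moreover have "0 \<le> Jobj K L p0 \<alpha> \<pi> br n tg d" by (rule J_lemma(2)[of n tg L K p0 \<alpha> \<pi> br d, OF g hprev hd])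
      ultimately show "Jobj K L p0 \<alpha> \<pi> br n tg (loo_mean K L p0 \<alpha> \<pi>) \<le> Jobj K L p0 \<alpha> \<pi> br n tg d" by simp
    qed
  qed
  have P3: "(\<forall>s t. 0 \<le> s \<longrightarrow> s < t \<longrightarrow> t \<le> 1 \<longrightarrow> \<alpha> t < \<alpha> s) \<longrightarrow> \<alpha> 0 = 1 \<longrightarrow>
    (\<forall>t. 0 < t \<longrightarrow> t \<le> 1 \<longrightarrow> 0 < \<alpha> t \<and> \<alpha> t < 1) \<longrightarrow>
      (\<forall>l s t k \<nu> \<nu>'. l < L \<longrightarrow> 0 < s \<longrightarrow> s < t \<longrightarrow> t \<le> 1 \<longrightarrow> k < K \<longrightarrow>
          simplex K \<nu> \<longrightarrow> simplex K \<nu>' \<longrightarrow> canon K \<alpha> l s t \<nu> k = canon K \<alpha> l s t \<nu>' k \<longrightarrow> \<nu> = \<nu>')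
    \<and> (\<forall>l s t xt \<nu>. l < L \<longrightarrow> 0 < s \<longrightarrow> s < t \<longrightarrow> t \<le> 1 \<longrightarrow> xt \<in> seqs K L \<longrightarrow>
          0 < pt K L p0 \<alpha> (unif K) t xt \<longrightarrow> simplex K \<nu> \<longrightarrow>
          canon K \<alpha> l s t \<nu> (xt l) = prev K L p0 \<alpha> (unif K) l s t xt \<longrightarrow>
          \<nu> = loo_mean K L p0 \<alpha> (unif K) xt t l)
    \<and> (\<forall>n tg d. grid n tg \<longrightarrow> predictor K L d \<longrightarrow>
          Jobj K L p0 \<alpha> (unif K) (canon K \<alpha>) n tg d \<le> Jobj K L p0 \<alpha> (unif K) (canon K \<alpha>) n tg (loo_mean K L p0 \<alpha> (unif K)) \<longrightarrow>
          (\<forall>i\<in>{1..n}. 0 < tg (i - 1) \<longrightarrow> (\<forall>l<L. \<forall>x\<in>seqs K L.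
             0 < pt K L p0 \<alpha> (unif K) (tg i) x \<longrightarrow> d x (tg i) l = loo_mean K L p0 \<alpha> (unif K) x (tg i) l)))"
  proof (intro impI)
    assume strict: "\<forall>s t. 0 \<le> s \<longrightarrow> s < t \<longrightarrow> t \<le> 1 \<longrightarrow> \<alpha> t < \<alpha> s"
      and apos: "\<forall>t. 0 < t \<longrightarrow> t \<le> 1 \<longrightarrow> 0 < \<alpha> t \<and> \<alpha> t < 1"
    have ap: "0 < \<alpha> u" if "0 \<le> u" "u \<le> 1" for u
      using apos a0 that by (cases "u = 0") auto
    have al1: "\<alpha> u < 1" if "0 < u" "u \<le> 1" for u using apos that by auto
    have pis: "\<forall>l<L. simplex K (unif K l)" using unif_simplex[OF K0] by blast
    have inj: "\<nu> = \<nu>'" if st: "0 \<le> s" "s < t" "t \<le> 1" and k: "k < K" and nu: "simplex K \<nu>" and nu': "simplex K \<nu>'"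
       and eq: "canon K \<alpha> l s t \<nu> k = canon K \<alpha> l s t \<nu>' k" for l s t k \<nu> \<nu>'
    proof -
      have as: "0 < \<alpha> s" using ap st by simp
      have at: "\<alpha> t < 1" using al1 st by simp
      have at0: "0 \<le> \<alpha> t" using ap st by (simp add: less_imp_le)
      have ats: "\<alpha> t < \<alpha> s" using strict st by blast
      have "\<forall>x<K. qfwd \<alpha> (unif K) l s t k x * q0 \<alpha> (unif K) l s x \<nu> / q0 \<alpha> (unif K) l t k \<nu>
                  = qfwd \<alpha> (unif K) l s t k x * q0 \<alpha> (unif K) l s x \<nu>' / q0 \<alpha> (unif K) l t k \<nu>'"
      proof (intro allI impI)
        fix x assume x: "x < K"
        have "canon K \<alpha> l s t \<nu> k x = canon K \<alpha> l s t \<nu>' k x" using eq by simp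
        then show "qfwd \<alpha> (unif K) l s t k x * q0 \<alpha> (unif K) l s x \<nu> / q0 \<alpha> (unif K) l t k \<nu>
                  = qfwd \<alpha> (unif K) l s t k x * q0 \<alpha> (unif K) l s x \<nu>' / q0 \<alpha> (unif K) l t k \<nu>'"
          unfolding canon_eq[where \<alpha>=\<alpha> and s=s and t=t and l=l, OF sch K0 as at st nu k]
            canon_eq[where \<alpha>=\<alpha> and s=s and t=t and l=l, OF sch K0 as at st nu' k] using x by simp
      qed
      then show ?thesis using bf_inj[where \<alpha>=\<alpha> and s=s and t=t and l=l, OF K0 as at0 ats at nu nu' k] by blast
    qed
    have prevU: "prev K L p0 \<alpha> (unif K) l s t xt = canon K \<alpha> l s t (loo_mean K L p0 \<alpha> (unif K) xt t l) (xt l)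
          \<and> simplex K (loo_mean K L p0 \<alpha> (unif K) xt t l)"
      if st: "0 \<le> s" "s < t" "t \<le> 1" and l: "l < L" and xt: "xt \<in> seqs K L" and pos: "0 < pt K L p0 \<alpha> (unif K) t xt"
      for s t l xt
    proof -
      define \<nu> where "\<nu> = loo_mean K L p0 \<alpha> (unif K) xt t l"
      have M: "simplex K \<nu> \<and> 0 < q0 \<alpha> (unif K) l t (xt l) \<nu>
        \<and> (\<forall>x<K. prev K L p0 \<alpha> (unif K) l s t xt x = qfwd \<alpha> (unif K) l s t (xt l) x * q0 \<alpha> (unif K) l s x \<nu> / q0 \<alpha> (unif K) l t (xt l) \<nu>)
        \<and> (\<forall>x. K \<le> x \<longrightarrow> prev K L p0 \<alpha> (unif K) l s t xt x = 0)"
        unfolding \<nu>_def by (rule main[OF dist sch pis st l xt pos])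
      have xtl: "xt l < K" using seqs_lt[OF xt l] .
      have as: "0 < \<alpha> s" using ap st by simp
      have at: "\<alpha> t < 1" using al1 st by simp
      have nu: "simplex K \<nu>" using M by blast
      have "prev K L p0 \<alpha> (unif K) l s t xt = canon K \<alpha> l s t \<nu> (xt l)"
        unfolding canon_eq[where \<alpha>=\<alpha> and s=s and t=t and l=l, OF sch K0 as at st nu xtl]
      proof
        fix x show "prev K L p0 \<alpha> (unif K) l s t xt x = (if x < K then qfwd \<alpha> (unif K) l s t (xt l) x * q0 \<alpha> (unif K) l s x \<nu> / q0 \<alpha> (unif K) l t (xt l) \<nu> else 0)"
          using M by (cases "x < K") auto
      qed
      then show ?thesis using nu unfolding \<nu>_def by simp
    qed
    have C1: "\<forall>l s t k \<nu> \<nu>'. l < L \<longrightarrow> 0 < s \<longrightarrow> s < t \<longrightarrow> t \<le> 1 \<longrightarrow> k < K \<longrightarrow>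
          simplex K \<nu> \<longrightarrow> simplex K \<nu>' \<longrightarrow> canon K \<alpha> l s t \<nu> k = canon K \<alpha> l s t \<nu>' k \<longrightarrow> \<nu> = \<nu>'"
      using inj by (meson less_imp_le)
    have C2: "\<forall>l s t xt \<nu>. l < L \<longrightarrow> 0 < s \<longrightarrow> s < t \<longrightarrow> t \<le> 1 \<longrightarrow> xt \<in> seqs K L \<longrightarrow>
          0 < pt K L p0 \<alpha> (unif K) t xt \<longrightarrow> simplex K \<nu> \<longrightarrow>
          canon K \<alpha> l s t \<nu> (xt l) = prev K L p0 \<alpha> (unif K) l s t xt \<longrightarrow>
          \<nu> = loo_mean K L p0 \<alpha> (unif K) xt t l"
    proof (intro allI impI)
      fix l s t xt \<nu>
      assume l: "l < L" and s0: "0 < s" and st: "s < t" "t \<le> 1" and xt: "xt \<in> seqs K L"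
        and pos: "0 < pt K L p0 \<alpha> (unif K) t xt" and nu: "simplex K \<nu>"
        and eq: "canon K \<alpha> l s t \<nu> (xt l) = prev K L p0 \<alpha> (unif K) l s t xt"
      have P: "prev K L p0 \<alpha> (unif K) l s t xt = canon K \<alpha> l s t (loo_mean K L p0 \<alpha> (unif K) xt t l) (xt l)
          \<and> simplex K (loo_mean K L p0 \<alpha> (unif K) xt t l)"
        using prevU[OF less_imp_le[OF s0] st l xt pos] .
      show "\<nu> = loo_mean K L p0 \<alpha> (unif K) xt t l"
        using inj[OF less_imp_le[OF s0] st seqs_lt[OF xt l] nu] P eq by metis
    qed
    have C3: "\<forall>n tg d. grid n tg \<longrightarrow> predictor K L d \<longrightarrow>
          Jobj K L p0 \<alpha> (unif K) (canon K \<alpha>) n tg d \<le> Jobj K L p0 \<alpha> (unif K) (canon K \<alpha>) n tg (loo_mean K L p0 \<alpha> (unif K)) \<longrightarrow>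
          (\<forall>i\<in>{1..n}. 0 < tg (i - 1) \<longrightarrow> (\<forall>l<L. \<forall>x\<in>seqs K L.
             0 < pt K L p0 \<alpha> (unif K) (tg i) x \<longrightarrow> d x (tg i) l = loo_mean K L p0 \<alpha> (unif K) x (tg i) l))"
    proof (intro allI impI)
      fix n tg d
      assume g: "grid n tg" and pd: "predictor K L d"
        and Jle: "Jobj K L p0 \<alpha> (unif K) (canon K \<alpha>) n tg d \<le> Jobj K L p0 \<alpha> (unif K) (canon K \<alpha>) n tg (loo_mean K L p0 \<alpha> (unif K))"
      have dS: "simplex K (d x (tg i) l)" if i: "i \<in> {1..n}" and l: "l < L" and x: "x \<in> seqs K L" for i l x
        using pd x l grid_props(3,4)[OF g i] unfolding predictor_def by auto
      have hprev: "prev K L p0 \<alpha> (unif K) l (tg (i-1)) (tg i) x = canon K \<alpha> l (tg (i-1)) (tg i) (loo_mean K L p0 \<alpha> (unif K) x (tg i) l) (x l)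
        \<and> simplex K (prev K L p0 \<alpha> (unif K) l (tg (i-1)) (tg i) x)"
        if i: "i \<in> {1..n}" and l: "l < L" and x: "x \<in> seqs K L" and pos: "0 < pt K L p0 \<alpha> (unif K) (tg i) x" for i l x
      proof -
        note st = grid_props(1,2,3)[OF g i]
        have P: "prev K L p0 \<alpha> (unif K) l (tg (i-1)) (tg i) x = canon K \<alpha> l (tg (i-1)) (tg i) (loo_mean K L p0 \<alpha> (unif K) x (tg i) l) (x l)
          \<and> simplex K (loo_mean K L p0 \<alpha> (unif K) x (tg i) l)"
          by (rule prevU[OF st l x pos])
        have as: "0 < \<alpha> (tg (i-1))" using ap st by simp
        have at: "\<alpha> (tg i) < 1" using al1 st by simp
        have "simplex K (canon K \<alpha> l (tg (i-1)) (tg i) (loo_mean K L p0 \<alpha> (unif K) x (tg i) l) (x l))"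
          using canon_simplex[where \<alpha>=\<alpha> and s="tg (i-1)" and t="tg i" and l=l, OF sch K0 as at st _ seqs_lt[OF x l]] P by blast
        then show ?thesis using P by simp
      qed
      have hd: "simplex K (canon K \<alpha> l (tg (i-1)) (tg i) (d x (tg i) l) (x l))"
        if i: "i \<in> {1..n}" and l: "l < L" and x: "x \<in> seqs K L" and "0 < pt K L p0 \<alpha> (unif K) (tg i) x" for i l x
      proof -
        note st = grid_props(1,2,3)[OF g i]
        have as: "0 < \<alpha> (tg (i-1))" using ap st by simp
        have at: "\<alpha> (tg i) < 1" using al1 st by simp
        show ?thesis
          using canon_simplex[where \<alpha>=\<alpha> and s="tg (i-1)" and t="tg i" and l=l, OF sch K0 as at st dS[OF i l x] seqs_lt[OF x l]] .
      qed
      have J0: "Jobj K L p0 \<alpha> (unif K) (canon K \<alpha>) n tg (loo_mean K L p0 \<alpha> (unif K)) = 0"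
        by (rule J_lemma(1)[of n tg L K p0 \<alpha> "unif K" "canon K \<alpha>" d, OF g hprev hd])
      have EQ: "\<forall>i\<in>{1..n}. \<forall>l<L. \<forall>x\<in>seqs K L. 0 < pt K L p0 \<alpha> (unif K) (tg i) x \<longrightarrow>
        prev K L p0 \<alpha> (unif K) l (tg (i-1)) (tg i) x = canon K \<alpha> l (tg (i-1)) (tg i) (d x (tg i) l) (x l)"
        using J_lemma(3)[of n tg L K p0 \<alpha> "unif K" "canon K \<alpha>" d, OF g hprev hd Jle[unfolded J0]] by blast
      show "\<forall>i\<in>{1..n}. 0 < tg (i - 1) \<longrightarrow> (\<forall>l<L. \<forall>x\<in>seqs K L.
             0 < pt K L p0 \<alpha> (unif K) (tg i) x \<longrightarrow> d x (tg i) l = loo_mean K L p0 \<alpha> (unif K) x (tg i) l)"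
      proof (intro ballI impI allI)
        fix i l x assume i: "i \<in> {1..n}" and "0 < tg (i - 1)" and l: "l < L" and x: "x \<in> seqs K L"
          and pos: "0 < pt K L p0 \<alpha> (unif K) (tg i) x"
        note st = grid_props(1,2,3)[OF g i]
        have e1: "canon K \<alpha> l (tg (i-1)) (tg i) (d x (tg i) l) (x l) = canon K \<alpha> l (tg (i-1)) (tg i) (loo_mean K L p0 \<alpha> (unif K) x (tg i) l) (x l)"
          using EQ i l x pos hprev[OF i l x pos] by metis
        have lS: "simplex K (loo_mean K L p0 \<alpha> (unif K) x (tg i) l)" using prevU[OF st l x pos] by blast
        show "d x (tg i) l = loo_mean K L p0 \<alpha> (unif K) x (tg i) l"
          by (rule inj[OF st seqs_lt[OF x l] dS[OF i l x] lS e1])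
      qed
    qed
    show "(\<forall>l s t k \<nu> \<nu>'. l < L \<longrightarrow> 0 < s \<longrightarrow> s < t \<longrightarrow> t \<le> 1 \<longrightarrow> k < K \<longrightarrow>
          simplex K \<nu> \<longrightarrow> simplex K \<nu>' \<longrightarrow> canon K \<alpha> l s t \<nu> k = canon K \<alpha> l s t \<nu>' k \<longrightarrow> \<nu> = \<nu>')
    \<and> (\<forall>l s t xt \<nu>. l < L \<longrightarrow> 0 < s \<longrightarrow> s < t \<longrightarrow> t \<le> 1 \<longrightarrow> xt \<in> seqs K L \<longrightarrow>
          0 < pt K L p0 \<alpha> (unif K) t xt \<longrightarrow> simplex K \<nu> \<longrightarrow>
          canon K \<alpha> l s t \<nu> (xt l) = prev K L p0 \<alpha> (unif K) l s t xt \<longrightarrow>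
          \<nu> = loo_mean K L p0 \<alpha> (unif K) xt t l)
    \<and> (\<forall>n tg d. grid n tg \<longrightarrow> predictor K L d \<longrightarrow>
          Jobj K L p0 \<alpha> (unif K) (canon K \<alpha>) n tg d \<le> Jobj K L p0 \<alpha> (unif K) (canon K \<alpha>) n tg (loo_mean K L p0 \<alpha> (unif K)) \<longrightarrow>
          (\<forall>i\<in>{1..n}. 0 < tg (i - 1) \<longrightarrow> (\<forall>l<L. \<forall>x\<in>seqs K L.
             0 < pt K L p0 \<alpha> (unif K) (tg i) x \<longrightarrow> d x (tg i) l = loo_mean K L p0 \<alpha> (unif K) x (tg i) l)))"
      using C1 C2 C3 by blast
  qed
  show ?thesis using P12 P3 by blast
qed


end
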